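(* Let $C$ be a binary linear self-dual code of length $n$ with exact weight enumerator $W$ and derivatives $W_{<t>}$. Then for every integer $t$ with $0\le t\le n$, $W_{<t>}$ lies in the eigenspace of the eigenvalue $1$ of $K^{[n-t]}$, i.e. $W_{<t>}K^{[n-t]}=W_{<t>}$ (with $W_{<t>}$ regarded as a row vector and $K^{[0]}=[1]$).
   Context: $F=\{0,1\}$ is the binary field. A binary linear self-dual code $C$ of length $n$ is a linear subspace of $F^n$ of dimension $n/2$ equal to its orthogonal complement under the standard dot product. The exact weight enumerator of $C$ is the row vector $W\in\mathbb{Q}^{2^n}$ whose entries are labeled by the vectors of $F^n$ in lexicographic order, with $W[v]=1$ if $v\in C$ and $W[v]=0$ otherwise. Let $\rho=\sqrt2-1$. For $0\le t\le n$, the $t$-th derivative of $W$ is the row vector $W_{<t>}$ of length $2^{n-t}$ with entries labeled (in lexicographic order) by $v\in F^{n-t}$ given by $W_{<t>}[v]=\sum_{u\in F^t}\rho^{wt(u)}W[uv]$, where $wt(u)$ is the Hamming weight of $u$ and $uv$ is the concatenation of $u$ and $v$. $K=\frac{1}{\sqrt2}\begin{bmatrix}1&1\\1&-1\end{bmatrix}$, $K^{[1]}=K$, $K^{[m]}=K^{[m-1]}\otimes K$ (Kronecker product). *)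

theory Defs
  imports Complex_Main
begin

text \<open>Vectors of F^n are boolean lists of length n (False = 0, True = 1).
  Real row vectors indexed by F^m are functions bool list => real (only
  arguments of length m matter); matrices indexed by F^m x F^m are functions
  bool list => bool list => real. Lexicographic indexing corresponds to
  reading a list as a binary number, first entry most significant.\<close>

definition vecs :: "nat \<Rightarrow> bool list set" where
  "vecs m = {u. length u = m}"

definition vadd :: "bool list \<Rightarrow> bool list \<Rightarrow> bool list" where
  "vadd u v = map2 (\<noteq>) u v"

definition wt :: "bool list \<Rightarrow> nat" where
  "wt u = length (filter id u)"

definition dotF :: "bool list \<Rightarrow> bool list \<Rightarrow> bool" where
  "dotF u v = odd (length (filter id (map2 (\<and>) u v)))"

definition linear_code :: "nat \<Rightarrow> bool list set \<Rightarrow> bool" where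
  "linear_code n C \<longleftrightarrow> C \<subseteq> vecs n \<and> replicate n False \<in> C \<and>
     (\<forall>u\<in>C. \<forall>v\<in>C. vadd u v \<in> C)"

definition dual_code :: "nat \<Rightarrow> bool list set \<Rightarrow> bool list set" where
  "dual_code n C = {v \<in> vecs n. \<forall>c\<in>C. \<not> dotF c v}"

definition self_dual_code :: "nat \<Rightarrow> bool list set \<Rightarrow> bool" where
  "self_dual_code n C \<longleftrightarrow> linear_code n C \<and> even n \<and> card C = 2 ^ (n div 2)
     \<and> C = dual_code n C"

definition exact_we :: "bool list set \<Rightarrow> bool list \<Rightarrow> real" where
  "exact_we C v = (if v \<in> C then 1 else 0)"

definition rho :: real where "rho = sqrt 2 - 1"

definition deriv_we :: "(bool list \<Rightarrow> real) \<Rightarrow> nat \<Rightarrow> bool list \<Rightarrow> real" where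
  "deriv_we W t v = (\<Sum>u\<in>vecs t. rho ^ wt u * W (u @ v))"

definition Kmat :: "bool \<Rightarrow> bool \<Rightarrow> real" where
  "Kmat a b = (if a \<and> b then -1 else 1) / sqrt 2"

text \<open>K^[m]; K^[0] = [1], K^[m+1] = K^[m] \<otimes> K (Kronecker product: the last
  coordinate indexes the K factor).\<close>
fun Kpow :: "nat \<Rightarrow> bool list \<Rightarrow> bool list \<Rightarrow> real" where
  "Kpow 0 u v = 1"
| "Kpow (Suc m) u v = Kpow m (butlast u) (butlast v) * Kmat (last u) (last v)"

definition vec_mat :: "nat \<Rightarrow> (bool list \<Rightarrow> real) \<Rightarrow> (bool list \<Rightarrow> bool list \<Rightarrow> real)
    \<Rightarrow> bool list \<Rightarrow> real" where
  "vec_mat m x A v = (\<Sum>u\<in>vecs m. x u * A u v)"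

end

theory Submission
  imports Defs
begin

definition cnt :: "bool list \<Rightarrow> bool list \<Rightarrow> nat" where
  "cnt u v = length (filter id (map2 (\<and>) u v))"

definition sgnF :: "bool list \<Rightarrow> bool list \<Rightarrow> real" where
  "sgnF u v = (if dotF u v then -1 else 1)"

lemma cnt_Nil[simp]: "cnt [] v = 0" "cnt u [] = 0"
  by (auto simp: cnt_def)

lemma cnt_Cons[simp]: "cnt (a#u) (b#v) = (if a \<and> b then 1 else 0) + cnt u v"
  by (simp add: cnt_def)

lemma sgnF_Nil[simp]: "sgnF [] v = 1" "sgnF u [] = 1"
  by (auto simp: sgnF_def dotF_def)

lemma sgnF_Cons[simp]: "sgnF (a#u) (b#v) = (if a \<and> b then -1 else 1) * sgnF u v"
  using cnt_Cons[of a u b v] by (auto simp: sgnF_def dotF_def cnt_def)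

lemma sgnF_sq: "sgnF u v * sgnF u v = 1"
  by (simp add: sgnF_def)

lemma sgnF_append: "length x = length y \<Longrightarrow> sgnF (x@a) (y@b) = sgnF x y * sgnF a b"
  by (induction x y rule: list_induct2) auto

lemma sgnF_sym: "sgnF u v = sgnF v u"
proof (induction u arbitrary: v)
  case Nil then show ?case by simp
next
  case (Cons a u) then show ?case by (cases v) auto
qed

lemma sgnF_vadd: "length y = length w \<Longrightarrow> length w = length v \<Longrightarrow>
   sgnF y v * sgnF w v = sgnF (vadd y w) v"
proof (induction y w v rule: list_induct3)
  case Nil then show ?case by (simp add: vadd_def)
next
  case (Cons a y b w c v) then show ?case by (auto simp: vadd_def algebra_simps)
qed

lemma Kpow_eq: "length u = m \<Longrightarrow> length v = m \<Longrightarrow> Kpow m u v = sgnF u v / sqrt 2 ^ m"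
proof (induction m arbitrary: u v)
  case 0 then show ?case by simp
next
  case (Suc m)
  have u: "u = butlast u @ [last u]" using Suc.prems by (intro append_butlast_last_id[symmetric]) auto
  have v: "v = butlast v @ [last v]" using Suc.prems by (intro append_butlast_last_id[symmetric]) auto
  have "sgnF u v = sgnF (butlast u) (butlast v) * sgnF [last u] [last v]"
    using sgnF_append[of "butlast u" "butlast v" "[last u]" "[last v]"] Suc.prems u v by simp
  then show ?case using Suc by (simp add: Kmat_def)
qed

lemma finite_vecs[simp]: "finite (vecs m)"
proof -
  have "vecs m = {xs. set xs \<subseteq> UNIV \<and> length xs = m}" by (auto simp: vecs_def)
  then show ?thesis using finite_lists_length_eq[of "UNIV::bool set" m] by simp
qed

lemma vecs_Suc_sum: "sum f (vecs (Suc m)) = sum (\<lambda>u. f (False#u)) (vecs m) + sum (\<lambda>u. f (True#u)) (vecs m)"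
proof -
  have e: "vecs (Suc m) = Cons False ` vecs m \<union> Cons True ` vecs m"
  proof
    show "vecs (Suc m) \<subseteq> Cons False ` vecs m \<union> Cons True ` vecs m"
    proof
      fix z assume "z \<in> vecs (Suc m)"
      then have lz: "length z = Suc m" by (simp add: vecs_def)
      then obtain b u where bu: "z = b#u" "u \<in> vecs m"
        by (cases z) (auto simp: vecs_def)
      then show "z \<in> Cons False ` vecs m \<union> Cons True ` vecs m" 
      proof (cases b)
        case True
        have "z \<in> Cons True ` vecs m" using bu True by (intro image_eqI[of _ _ u]) simp_all
        then show ?thesis by (rule UnI2)
      next
        case False
        have "z \<in> Cons False ` vecs m" using bu False by (intro image_eqI[of _ _ u]) simp_all
        then show ?thesis by (rule UnI1)
      qed
    qed
  qed (auto simp: vecs_def)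
  have "sum f (vecs (Suc m)) = sum f (Cons False ` vecs m) + sum f (Cons True ` vecs m)"
    unfolding e by (rule sum.union_disjoint) auto
  also have "\<dots> = sum (\<lambda>u. f (False#u)) (vecs m) + sum (\<lambda>u. f (True#u)) (vecs m)"
    by (simp add: sum.reindex)
  finally show ?thesis .
qed

lemma vecs_append_sum: "sum f (vecs (a+b)) = (\<Sum>x\<in>vecs a. \<Sum>y\<in>vecs b. f (x@y))"
proof -
  have e: "vecs (a+b) = (\<lambda>(x,y). x@y) ` (vecs a \<times> vecs b)"
  proof
    show "vecs (a+b) \<subseteq> (\<lambda>(x,y). x@y) ` (vecs a \<times> vecs b)"
    proof
      fix z assume "z \<in> vecs (a+b)"
      then have "z = take a z @ drop a z" "take a z \<in> vecs a" "drop a z \<in> vecs b"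
        by (auto simp: vecs_def)
      then show "z \<in> (\<lambda>(x,y). x@y) ` (vecs a \<times> vecs b)"
        by (intro image_eqI[of _ _ "(take a z, drop a z)"]) simp_all
    qed
  qed (auto simp: vecs_def)
  have i: "inj_on (\<lambda>(x,y). x@y) (vecs a \<times> vecs b)"
  proof (rule inj_onI)
    fix p q assume p: "p \<in> vecs a \<times> vecs b" and q: "q \<in> vecs a \<times> vecs b"
      and e: "(\<lambda>(x,y). x@y) p = (\<lambda>(x,y). x@y) q"
    obtain x y x' y' where pq: "p = (x,y)" "q = (x',y')" by (cases p, cases q) auto
    have l: "length x = length x'" using p q pq by (simp add: vecs_def)
    show "p = q" using e l pq by simp
  qed
  show ?thesis unfolding e by (simp add: sum.reindex[OF i] sum.cartesian_product prod.case_distrib)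
qed

lemma charsum: "length z = m \<Longrightarrow>
  (\<Sum>v\<in>vecs m. sgnF z v) = (if z = replicate m False then 2^m else 0)"
proof (induction m arbitrary: z)
  case 0 then show ?case by (simp add: vecs_def)
next
  case (Suc m)
  then obtain a z' where z: "z = a#z'" "length z' = m" by (cases z) auto
  define S where "S = (\<Sum>v\<in>vecs m. sgnF z' v)"
  have "(\<Sum>v\<in>vecs (Suc m). sgnF z v) = (\<Sum>u\<in>vecs m. sgnF z (False#u)) + (\<Sum>u\<in>vecs m. sgnF z (True#u))"
    by (rule vecs_Suc_sum)
  also have "\<dots> = S + (if a then - S else S)"
    by (simp add: z(1) S_def sum_negf)
  also have "\<dots> = (if z = replicate (Suc m) False then 2^Suc m else 0)"
    using Suc.IH[OF z(2)] unfolding S_def[symmetric] by (cases a) (auto simp: z(1))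
  finally show ?case .
qed

lemma vadd_zero: "length y = length w \<Longrightarrow> (vadd y w = replicate (length y) False) = (y = w)"
  by (induction y w rule: list_induct2) (auto simp: vadd_def)

lemma ortho: "y \<in> vecs m \<Longrightarrow> w \<in> vecs m \<Longrightarrow>
  (\<Sum>v\<in>vecs m. Kpow m y v * Kpow m v w) = (if y = w then 1 else 0)"
proof -
  assume y: "y \<in> vecs m" and w: "w \<in> vecs m"
  have "(\<Sum>v\<in>vecs m. Kpow m y v * Kpow m v w) = (\<Sum>v\<in>vecs m. sgnF (vadd y w) v / 2^m)"
  proof (rule sum.cong[OF refl])
    fix v assume v: "v \<in> vecs m"
    have "Kpow m y v * Kpow m v w = sgnF y v * sgnF w v / (sqrt 2 ^ m * sqrt 2 ^ m)"
      using y w v by (simp add: Kpow_eq vecs_def sgnF_sym[of v w])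
    also have "sqrt 2 ^ m * sqrt 2 ^ m = (2::real) ^ m"
      by (simp add: power_mult_distrib[symmetric])
    finally show "Kpow m y v * Kpow m v w = sgnF (vadd y w) v / 2^m"
      using y w v by (simp add: sgnF_vadd vecs_def)
  qed
  also have "\<dots> = (\<Sum>v\<in>vecs m. sgnF (vadd y w) v) / 2^m" by (simp add: sum_divide_distrib)
  also have "\<dots> = (if y = w then 1 else 0)"
  proof -
    have l: "length (vadd y w) = m" using y w by (simp add: vadd_def vecs_def)
    have "(vadd y w = replicate m False) = (y = w)" using y w vadd_zero[of y w] by (simp add: vecs_def)
    then show ?thesis using charsum[OF l] by simp
  qed
  finally show ?thesis .
qed

lemma rho_eig: "(\<Sum>b\<in>UNIV. Kmat a b * rho ^ (if b then 1 else 0)) = rho ^ (if a then 1 else 0)"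
proof -
  have s: "sqrt 2 * sqrt 2 = (2::real)" by simp
  have "(1 - rho) = sqrt 2 * rho" unfolding rho_def by (simp add: algebra_simps s)
  moreover have "1 + rho = sqrt 2" unfolding rho_def by simp
  ultimately show ?thesis by (cases a) (auto simp: Kmat_def UNIV_bool field_simps)
qed

lemma wt_Cons[simp]: "wt (b#u) = (if b then 1 else 0) + wt u"
  by (simp add: wt_def)

lemma eig: "x \<in> vecs t \<Longrightarrow> (\<Sum>u\<in>vecs t. Kpow t x u * rho ^ wt u) = rho ^ wt x"
proof (induction t arbitrary: x)
  case 0 then show ?case by (simp add: vecs_def wt_def)
next
  case (Suc m)
  then obtain a x' where x: "x = a#x'" "x' \<in> vecs m" by (auto simp: vecs_def length_Suc_conv)
  have K: "Kpow (Suc m) (a#x') (b#u) = Kmat a b * Kpow m x' u" if "u \<in> vecs m" for b u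
    using that x by (simp add: Kpow_eq vecs_def Kmat_def del: Kpow.simps)
  define S where "S = (\<Sum>u\<in>vecs m. Kpow m x' u * rho ^ wt u)"
  have "(\<Sum>u\<in>vecs (Suc m). Kpow (Suc m) x u * rho ^ wt u)
     = (\<Sum>u\<in>vecs m. Kmat a False * (Kpow m x' u * rho ^ wt u)) + (\<Sum>u\<in>vecs m. (Kmat a True * rho) * (Kpow m x' u * rho ^ wt u))"
    unfolding vecs_Suc_sum x(1)
    by (intro arg_cong2[where f="(+)"] sum.cong refl) (simp_all add: K del: Kpow.simps)
  also have "\<dots> = (Kmat a False + Kmat a True * rho) * S"
    by (simp add: S_def sum_distrib_left[symmetric] distrib_right)
  also have "\<dots> = rho ^ wt x" using Suc.IH[OF x(2)] rho_eig[of a] by (simp add: S_def x UNIV_bool)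
  finally show ?case .
qed

lemma vadd_vadd: "length c = length d \<Longrightarrow> vadd (vadd c d) d = c"
  by (induction c d rule: list_induct2) (auto simp: vadd_def)

lemma sqrt2_pow_even: "even n \<Longrightarrow> sqrt 2 ^ n = (2::real) ^ (n div 2)"
proof -
  assume "even n" then obtain k where "n = 2*k" by auto
  then show ?thesis by (simp add: power_mult)
qed

lemma macw:
  assumes sd: "self_dual_code n C" and z: "z \<in> vecs n"
  shows "(\<Sum>x\<in>vecs n. exact_we C x * Kpow n x z) = exact_we C z"
proof -
  have sd': "linear_code n C \<and> even n \<and> card C = 2 ^ (n div 2) \<and> C = dual_code n C"
    using sd unfolding self_dual_code_def .
  have lc: "linear_code n C" using sd' by (rule conjunct1)
  have ev: "even n" using sd' by (rule conjunct1[OF conjunct2])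
  have card: "card C = 2 ^ (n div 2)" using sd' by (rule conjunct1[OF conjunct2[OF conjunct2]])
  have dual: "C = dual_code n C" using sd' by (rule conjunct2[OF conjunct2[OF conjunct2]])
  have lc': "C \<subseteq> vecs n \<and> replicate n False \<in> C \<and> (\<forall>u\<in>C. \<forall>v\<in>C. vadd u v \<in> C)"
    using lc unfolding linear_code_def .
  have Cv: "C \<subseteq> vecs n" using lc' by (rule conjunct1)
  have lin: "\<forall>u\<in>C. \<forall>v\<in>C. vadd u v \<in> C" using lc' by (rule conjunct2[OF conjunct2])
  have dz: "dual_code n C = C" using dual by (rule sym)
  have fC: "finite C" using Cv by (rule finite_subset) simp
  have "(\<Sum>x\<in>vecs n. exact_we C x * Kpow n x z) = (\<Sum>x\<in>C. Kpow n x z)"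
    by (rule sum.mono_neutral_cong_right) (use Cv in \<open>auto simp: exact_we_def\<close>)
  also have "\<dots> = (\<Sum>x\<in>C. sgnF x z) / sqrt 2 ^ n"
    unfolding sum_divide_distrib
    by (rule sum.cong[OF refl]) (use Cv z in \<open>auto simp: Kpow_eq vecs_def\<close>)
  also have "\<dots> = exact_we C z"
  proof (cases "z \<in> C")
    case True
    then have "z \<in> dual_code n C" by (simp add: dz)
    then have "\<forall>c\<in>C. \<not> dotF c z" unfolding dual_code_def by blast
    then have "(\<Sum>x\<in>C. sgnF x z) = (\<Sum>x\<in>C. 1)" by (auto simp: sgnF_def intro: sum.cong)
    then show ?thesis using True card ev by (simp add: sqrt2_pow_even exact_we_def)
  next
    case False
    then have "z \<notin> dual_code n C" by (simp add: dz)
    then obtain c0 where c0: "c0 \<in> C" "dotF c0 z" using z unfolding dual_code_def by blast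
    have len: "x \<in> C \<Longrightarrow> length x = n" for x using Cv by (auto simp: vecs_def)
    have "(\<Sum>x\<in>C. sgnF x z) = (\<Sum>x\<in>C. sgnF (vadd x c0) z)"
      by (rule sum.reindex_bij_witness[where i="\<lambda>x. vadd x c0" and j="\<lambda>x. vadd x c0"])
         (use c0 lin len in \<open>auto simp: vadd_vadd\<close>)
    also have "\<dots> = (\<Sum>x\<in>C. - sgnF x z)"
    proof (rule sum.cong[OF refl])
      fix x assume x: "x \<in> C"
      have "sgnF (vadd x c0) z = sgnF x z * sgnF c0 z"
        using sgnF_vadd[of x c0 z] len[OF x] len[OF c0(1)] z by (simp add: vecs_def)
      then show "sgnF (vadd x c0) z = - sgnF x z" using c0 by (simp add: sgnF_def)
    qed
    finally have "(\<Sum>x\<in>C. sgnF x z) = 0" by (simp add: sum_negf)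
    then show ?thesis using False by (simp add: exact_we_def)
  qed
  finally show ?thesis .
qed

lemma Kpow_append: "x \<in> vecs a \<Longrightarrow> u \<in> vecs a \<Longrightarrow> y \<in> vecs b \<Longrightarrow> v \<in> vecs b \<Longrightarrow>
  Kpow (a+b) (x@y) (u@v) = Kpow a x u * Kpow b y v"
  by (simp add: Kpow_eq vecs_def sgnF_append power_add del: Kpow.simps)

lemma swap_same: "(\<Sum>v\<in>A. \<Sum>y\<in>B. F v y) = (\<Sum>y\<in>B. \<Sum>v\<in>A. F v y)"
  by (rule sum.swap)

lemma delta_sum: "w \<in> vecs m \<Longrightarrow> (\<Sum>x\<in>A. \<Sum>y\<in>vecs m. (if y = w then f x else (0::real))) = (\<Sum>x\<in>A. f x)"
  by simp

theorem theorem6: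
  fixes n :: nat and C :: "bool list set"
  assumes "self_dual_code n C"
  shows "\<forall>t \<le> n. \<forall>v \<in> vecs (n - t).
           vec_mat (n - t) (deriv_we (exact_we C) t) (Kpow (n - t)) v
             = deriv_we (exact_we C) t v"
proof (intro allI impI ballI)
  fix t w assume tn: "t \<le> n" and w: "w \<in> vecs (n - t)"
  define m where "m = n - t"
  have nm: "n = t + m" using tn by (simp add: m_def)
  have wm: "w \<in> vecs m" using w by (simp add: m_def)
  define W where "W = exact_we C"
  define a where "a = (\<lambda>u. rho ^ wt u)"
  define T where "T = (\<lambda>x y u v. a u * W (x@y) * Kpow t x u * Kpow m y v * Kpow m v w)"
  have A: "W (u@v) = (\<Sum>x\<in>vecs t. \<Sum>y\<in>vecs m. W (x@y) * (Kpow t x u * Kpow m y v))"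
    if u: "u \<in> vecs t" and v: "v \<in> vecs m" for u v
  proof -
    have "u@v \<in> vecs n" using u v nm by (simp add: vecs_def)
    from macw[OF assms this] have "W (u@v) = (\<Sum>z\<in>vecs (t+m). W z * Kpow (t+m) z (u@v))"
      by (simp add: W_def nm)
    also have "\<dots> = (\<Sum>x\<in>vecs t. \<Sum>y\<in>vecs m. W (x@y) * Kpow (t+m) (x@y) (u@v))"
      by (rule vecs_append_sum)
    also have "\<dots> = (\<Sum>x\<in>vecs t. \<Sum>y\<in>vecs m. W (x@y) * (Kpow t x u * Kpow m y v))"
      by (intro sum.cong refl) (simp add: Kpow_append u v del: Kpow.simps)
    finally show ?thesis .
  qed
  have "vec_mat m (deriv_we W t) (Kpow m) w = (\<Sum>v\<in>vecs m. (\<Sum>u\<in>vecs t. a u * W (u@v)) * Kpow m v w)"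
    by (simp add: vec_mat_def deriv_we_def a_def)
  also have "\<dots> = (\<Sum>v\<in>vecs m. (\<Sum>u\<in>vecs t. a u * (\<Sum>x\<in>vecs t. \<Sum>y\<in>vecs m. W (x@y) * (Kpow t x u * Kpow m y v))) * Kpow m v w)"
    by (intro sum.cong refl arg_cong2[where f="(*)"]) (simp add: A)
  also have "\<dots> = (\<Sum>v\<in>vecs m. \<Sum>u\<in>vecs t. \<Sum>x\<in>vecs t. \<Sum>y\<in>vecs m. T x y u v)"
    unfolding sum_distrib_left sum_distrib_right
    by (intro sum.cong refl) (simp only: T_def mult_ac)
  also have "\<dots> = (\<Sum>u\<in>vecs t. \<Sum>v\<in>vecs m. \<Sum>x\<in>vecs t. \<Sum>y\<in>vecs m. T x y u v)"
    by (rule sum.swap)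
  also have "\<dots> = (\<Sum>u\<in>vecs t. \<Sum>x\<in>vecs t. \<Sum>v\<in>vecs m. \<Sum>y\<in>vecs m. T x y u v)"
    by (rule sum.cong[OF refl], rule sum.swap)
  also have "\<dots> = (\<Sum>u\<in>vecs t. \<Sum>x\<in>vecs t. \<Sum>y\<in>vecs m. \<Sum>v\<in>vecs m. T x y u v)"
    by (rule sum.cong[OF refl], rule sum.cong[OF refl], rule swap_same)
  also have "\<dots> = (\<Sum>x\<in>vecs t. \<Sum>u\<in>vecs t. \<Sum>y\<in>vecs m. \<Sum>v\<in>vecs m. T x y u v)"
    by (rule swap_same)
  also have "\<dots> = (\<Sum>x\<in>vecs t. \<Sum>y\<in>vecs m. \<Sum>u\<in>vecs t. \<Sum>v\<in>vecs m. T x y u v)"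
    by (rule sum.cong[OF refl], rule swap_same)
  also have "\<dots> = (\<Sum>x\<in>vecs t. \<Sum>y\<in>vecs m. W (x@y) * ((\<Sum>u\<in>vecs t. Kpow t x u * a u) * (\<Sum>v\<in>vecs m. Kpow m y v * Kpow m v w)))"
  proof (intro sum.cong refl)
    fix x y
    have "W (x@y) * ((\<Sum>u\<in>vecs t. Kpow t x u * a u) * (\<Sum>v\<in>vecs m. Kpow m y v * Kpow m v w))
      = W (x@y) * (\<Sum>u\<in>vecs t. \<Sum>v\<in>vecs m. (Kpow t x u * a u) * (Kpow m y v * Kpow m v w))"
      by (simp only: sum_product)
    also have "\<dots> = (\<Sum>u\<in>vecs t. \<Sum>v\<in>vecs m. T x y u v)"
      unfolding sum_distrib_left by (intro sum.cong refl) (simp only: T_def mult_ac)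
    finally show "(\<Sum>u\<in>vecs t. \<Sum>v\<in>vecs m. T x y u v) = W (x@y) * ((\<Sum>u\<in>vecs t. Kpow t x u * a u) * (\<Sum>v\<in>vecs m. Kpow m y v * Kpow m v w))"
      by (rule sym)
  qed
  also have "\<dots> = (\<Sum>x\<in>vecs t. \<Sum>y\<in>vecs m. (if y = w then a x * W (x@w) else 0))"
  proof (intro sum.cong refl)
    fix x y assume x: "x \<in> vecs t" and y: "y \<in> vecs m"
    have e1: "(\<Sum>u\<in>vecs t. Kpow t x u * a u) = a x" unfolding a_def by (rule eig[OF x])
    have e2: "(\<Sum>v\<in>vecs m. Kpow m y v * Kpow m v w) = (if y = w then 1 else 0)" by (rule ortho[OF y wm])
    show "W (x@y) * ((\<Sum>u\<in>vecs t. Kpow t x u * a u) * (\<Sum>v\<in>vecs m. Kpow m y v * Kpow m v w))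
      = (if y = w then a x * W (x@w) else 0)"
      unfolding e1 e2 by (simp add: mult.commute)
  qed
  also have "\<dots> = (\<Sum>x\<in>vecs t. a x * W (x@w))"
    by (rule delta_sum[OF wm])
  also have "\<dots> = deriv_we W t w" by (simp add: deriv_we_def a_def)
  finally show "vec_mat (n - t) (deriv_we (exact_we C) t) (Kpow (n - t)) w = deriv_we (exact_we C) t w"
    by (simp add: W_def m_def)
qed

end
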